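(* Let $K$ be a field, $S=K[x_1,\ldots,x_n]$, let $m<n$, let $S'=K[x_1,\ldots,x_m]$ and let $J\subset S'$ be a monomial ideal. Set $I=JS$. Then for any $k$ with $m<k\le n$, \[ \operatorname{sdepth}(S/(I,x_k))=\operatorname{sdepth}(S/I)-1. \]
   Context: For a monomial ideal $I\subset S$, let $I^c$ be the $K$-linear subspace of $S$ spanned by all monomials not in $I$, so $S/I\cong I^c$ as $K$-vector spaces. For a monomial $v$ and a subset $Z\subset\{x_1,\ldots,x_n\}$, the $K$-subspace $vK[Z]$ spanned by all monomials $vw$ with $w$ a monomial in $K[Z]$ is a Stanley space of dimension $|Z|$. A Stanley decomposition $\mathcal D$ of $S/I$ is a decomposition of $I^c$ as a finite direct sum of Stanley spaces; $\operatorname{sdepth}(\mathcal D)$ is the minimal dimension of a Stanley space in $\mathcal D$, and $\operatorname{sdepth}(S/I)$ is the maximum of $\operatorname{sdepth}(\mathcal D)$ over all Stanley decompositions $\mathcal D$ of $S/I$. *)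

theory Defs
  imports "HOL-Library.Poly_Mapping" "HOL-Library.Extended_Nat"
begin

text \<open>Monomials in variables x_1, x_2, ... are finitely supported exponent vectors
  (index i = exponent of x_i); multiplication of monomials is addition of exponent vectors.
  Polynomials over a field K are finitely supported maps from monomials to K
  (coefficient of each monomial).\<close>

type_synonym mon = "nat \<Rightarrow>\<^sub>0 nat"

definition mons :: "nat \<Rightarrow> mon set" where
  "mons n = {u. Poly_Mapping.keys u \<subseteq> {1..n}}"

definition var :: "nat \<Rightarrow> mon" where
  "var i = Poly_Mapping.single i 1"

text \<open>A monomial ideal of K[x_1,...,x_n] is determined by (and is the K-span of) the set of
  monomials it contains; this set is closed under multiplication by monomials.\<close>
definition monomial_ideal :: "nat \<Rightarrow> mon set \<Rightarrow> bool" where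
  "monomial_ideal n M \<longleftrightarrow> M \<subseteq> mons n \<and> (\<forall>u\<in>M. \<forall>w\<in>mons n. u + w \<in> M)"

definition gen_ideal :: "nat \<Rightarrow> mon set \<Rightarrow> mon set" where
  "gen_ideal n G = {u \<in> mons n. \<exists>g\<in>G. \<exists>w\<in>mons n. u = g + w}"

definition span_mons :: "'k itself \<Rightarrow> mon set \<Rightarrow> (mon \<Rightarrow>\<^sub>0 'k::field) set" where
  "span_mons _ A = {p. Poly_Mapping.keys p \<subseteq> A}"

text \<open>I^c: the K-span of the monomials of S=K[x_1..x_n] not in the monomial ideal I (given by
  its monomial set M).\<close>
definition compl_space :: "'k itself \<Rightarrow> nat \<Rightarrow> mon set \<Rightarrow> (mon \<Rightarrow>\<^sub>0 'k::field) set" where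
  "compl_space K n M = span_mons K (mons n - M)"

definition stanley_space :: "'k itself \<Rightarrow> mon \<Rightarrow> nat set \<Rightarrow> (mon \<Rightarrow>\<^sub>0 'k::field) set" where
  "stanley_space K v Z = span_mons K {v + w | w. Poly_Mapping.keys w \<subseteq> Z}"

definition is_direct_sum :: "('a::ab_group_add) set \<Rightarrow> 'd set \<Rightarrow> ('d \<Rightarrow> 'a set) \<Rightarrow> bool" where
  "is_direct_sum V D sp \<longleftrightarrow> finite D \<and> (\<forall>d\<in>D. sp d \<subseteq> V) \<and>
     (\<forall>p\<in>V. \<exists>!f. (\<forall>d\<in>D. f d \<in> sp d) \<and> (\<forall>d. d \<notin> D \<longrightarrow> f d = 0) \<and> p = (\<Sum>d\<in>D. f d))"

text \<open>A Stanley decomposition of S/I (S = K[x_1..x_n], I given by monomial set M): a finite family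
  of Stanley spaces v K[Z] (v a monomial of S, Z \<subseteq> {x_1..x_n}) whose direct sum is I^c.\<close>
definition stanley_dec :: "'k::field itself \<Rightarrow> nat \<Rightarrow> mon set \<Rightarrow> (mon \<times> nat set) set \<Rightarrow> bool" where
  "stanley_dec K n M D \<longleftrightarrow> (\<forall>(v, Z)\<in>D. v \<in> mons n \<and> Z \<subseteq> {1..n}) \<and>
     is_direct_sum (compl_space K n M) D (\<lambda>(v, Z). stanley_space K v Z)"

text \<open>sdepth of a decomposition: minimal dimension |Z| (infinite for the empty decomposition).\<close>
definition sdepth_dec :: "(mon \<times> nat set) set \<Rightarrow> enat" where
  "sdepth_dec D = (INF (v, Z)\<in>D. enat (card Z))"

definition sdepth :: "'k::field itself \<Rightarrow> nat \<Rightarrow> mon set \<Rightarrow> enat" where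
  "sdepth K n M = (SUP D\<in>{D. stanley_dec K n M D}. sdepth_dec D)"

end

theory Submission
  imports Defs
begin

abbreviation (input) lookup where "lookup \<equiv> Poly_Mapping.lookup"
abbreviation (input) keys where "keys \<equiv> Poly_Mapping.keys"


lemma lookup_minus_nat: "lookup (f - g) i = lookup f i - lookup (g::mon) i"
  by (simp add: minus_poly_mapping.rep_eq)

definition restr :: "mon set \<Rightarrow> (mon \<Rightarrow>\<^sub>0 'k::field) \<Rightarrow> (mon \<Rightarrow>\<^sub>0 'k)" where
  "restr A p = Abs_poly_mapping (\<lambda>x. if x \<in> A then lookup p x else 0)"

lemma lookup_restr: "lookup (restr A p) x = (if x \<in> A then lookup p x else 0)"
proof -
  have "finite {x. (if x \<in> A then lookup p x else 0) \<noteq> 0}"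
    by (rule finite_subset[of _ "keys p"]) (auto simp: in_keys_iff)
  then show ?thesis unfolding restr_def by simp
qed

lemma lookup_out: "Poly_Mapping.keys g \<subseteq> A \<Longrightarrow> x \<notin> A \<Longrightarrow> Poly_Mapping.lookup g x = 0"
  by (meson in_keys_iff subsetD)

lemma direct_sum_iff:
  fixes K :: "'k::field itself" and A :: "'d \<Rightarrow> mon set"
  shows "is_direct_sum (span_mons K U) D (\<lambda>d. span_mons K (A d)) \<longleftrightarrow>
    finite D \<and> (\<forall>d\<in>D. \<forall>d'\<in>D. d \<noteq> d' \<longrightarrow> A d \<inter> A d' = {}) \<and> (\<Union>d\<in>D. A d) = U"
proof
  assume H: "is_direct_sum (span_mons K U) D (\<lambda>d. span_mons K (A d))"
  have fin: "finite D" using H by (simp add: is_direct_sum_def)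
  have sub: "\<And>d. d \<in> D \<Longrightarrow> span_mons K (A d) \<subseteq> span_mons K U" using H by (simp add: is_direct_sum_def)
  have uq: "\<And>p. p \<in> span_mons K U \<Longrightarrow> \<exists>!f. (\<forall>d\<in>D. f d \<in> span_mons K (A d)) \<and> (\<forall>d. d \<notin> D \<longrightarrow> f d = 0) \<and> p = (\<Sum>d\<in>D. f d)"
    using H by (simp add: is_direct_sum_def)
  have sng: "\<And>x B. (Poly_Mapping.single x (1::'k) \<in> span_mons K B) = (x \<in> B)"
    by (simp add: span_mons_def)
  have "(\<Union>d\<in>D. A d) \<subseteq> U"
  proof
    fix x assume "x \<in> (\<Union>d\<in>D. A d)"
    then obtain d where "d \<in> D" "x \<in> A d" by auto
    then show "x \<in> U" using sub[of d] sng[of x] by blast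
  qed
  moreover have "U \<subseteq> (\<Union>d\<in>D. A d)"
  proof
    fix x assume "x \<in> U"
    then have "Poly_Mapping.single x (1::'k) \<in> span_mons K U" using sng by blast
    then obtain f where f: "\<forall>d\<in>D. f d \<in> span_mons K (A d)" "Poly_Mapping.single x (1::'k) = (\<Sum>d\<in>D. f d)"
      using uq by blast
    have "lookup (Poly_Mapping.single x (1::'k)) x = 1" by simp
    then have "(\<Sum>d\<in>D. lookup (f d) x) \<noteq> 0" using f(2) by (simp add: lookup_sum)
    then obtain d where "d \<in> D" "lookup (f d) x \<noteq> 0" by (meson sum.neutral)
    then have "x \<in> keys (f d)" by (simp add: in_keys_iff)
    then have "x \<in> A d" using f(1) \<open>d \<in> D\<close> by (auto simp: span_mons_def)
    then show "x \<in> (\<Union>d\<in>D. A d)" using \<open>d \<in> D\<close> by auto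
  qed
  moreover have "\<forall>d\<in>D. \<forall>d'\<in>D. d \<noteq> d' \<longrightarrow> A d \<inter> A d' = {}"
  proof (intro ballI impI)
    fix d d' assume d: "d \<in> D" "d' \<in> D" "d \<noteq> d'"
    show "A d \<inter> A d' = {}"
    proof (rule ccontr)
      assume "A d \<inter> A d' \<noteq> {}"
      then obtain x where x: "x \<in> A d" "x \<in> A d'" by auto
      define p where "p = Poly_Mapping.single x (1::'k)"
      have pU: "p \<in> span_mons K U" using sub[OF d(1)] x sng p_def by blast
      define f1 where "f1 = (\<lambda>e. if e = d then p else 0)"
      define f2 where "f2 = (\<lambda>e. if e = d' then p else 0)"
      have z: "0 \<in> span_mons K B" for B by (simp add: span_mons_def)
      have P1: "(\<forall>e\<in>D. f1 e \<in> span_mons K (A e)) \<and> (\<forall>e. e \<notin> D \<longrightarrow> f1 e = 0) \<and> p = (\<Sum>e\<in>D. f1 e)"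
        using d x z sng fin unfolding f1_def p_def by (auto simp: sum.delta)
      have P2: "(\<forall>e\<in>D. f2 e \<in> span_mons K (A e)) \<and> (\<forall>e. e \<notin> D \<longrightarrow> f2 e = 0) \<and> p = (\<Sum>e\<in>D. f2 e)"
        using d x z sng fin unfolding f2_def p_def by (auto simp: sum.delta)
      have "f1 = f2" using uq[OF pU] P1 P2 by blast
      then have "p = 0" using d(3) unfolding f1_def f2_def by metis
      then show False unfolding p_def by (metis lookup_single_eq lookup_zero one_neq_zero)
    qed
  qed
  ultimately show "finite D \<and> (\<forall>d\<in>D. \<forall>d'\<in>D. d \<noteq> d' \<longrightarrow> A d \<inter> A d' = {}) \<and> (\<Union>d\<in>D. A d) = U"
    using fin by blast
next
  assume H: "finite D \<and> (\<forall>d\<in>D. \<forall>d'\<in>D. d \<noteq> d' \<longrightarrow> A d \<inter> A d' = {}) \<and> (\<Union>d\<in>D. A d) = U"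
  then have fin: "finite D" and dis: "\<And>d d'. d\<in>D \<Longrightarrow> d'\<in>D \<Longrightarrow> d \<noteq> d' \<Longrightarrow> A d \<inter> A d' = {}"
    and un: "(\<Union>d\<in>D. A d) = U" by auto
  have sub: "\<forall>d\<in>D. span_mons K (A d) \<subseteq> span_mons K U" using un by (auto simp: span_mons_def)
  have ex: "\<exists>!f. (\<forall>d\<in>D. f d \<in> span_mons K (A d)) \<and> (\<forall>d. d \<notin> D \<longrightarrow> f d = 0) \<and> p = (\<Sum>d\<in>D. f d)"
    if pU: "p \<in> span_mons K U" for p
  proof -
    define f where "f = (\<lambda>d. if d \<in> D then restr (A d) p else 0)"
    have keyeq: "(\<Sum>d\<in>D. if x \<in> A d then c else 0) = (if x \<in> U then c else 0)" for x and c :: 'k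
    proof (cases "x \<in> U")
      case True
      then obtain d0 where d0: "d0 \<in> D" "x \<in> A d0" using un by auto
      have "{d\<in>D. x \<in> A d} = {d0}" using d0 dis by blast
      then have "(\<Sum>d\<in>D. if x \<in> A d then c else 0) = (\<Sum>d\<in>{d\<in>D. x \<in> A d}. c)"
        using fin by (simp add: sum.inter_filter[symmetric])
      then show ?thesis using True \<open>{d\<in>D. x \<in> A d} = {d0}\<close> by simp
    next
      case False
      then show ?thesis using un by (auto intro!: sum.neutral)
    qed
    have P: "(\<forall>d\<in>D. f d \<in> span_mons K (A d)) \<and> (\<forall>d. d \<notin> D \<longrightarrow> f d = 0) \<and> p = (\<Sum>d\<in>D. f d)"
    proof (intro conjI)
      show "\<forall>d\<in>D. f d \<in> span_mons K (A d)"
        by (auto simp: f_def span_mons_def in_keys_iff lookup_restr split: if_splits)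
      show "\<forall>d. d \<notin> D \<longrightarrow> f d = 0" by (simp add: f_def)
      show "p = (\<Sum>d\<in>D. f d)"
      proof (rule poly_mapping_eqI)
        fix x
        have "lookup (\<Sum>d\<in>D. f d) x = (\<Sum>d\<in>D. if x \<in> A d then lookup p x else 0)"
          by (simp add: lookup_sum f_def lookup_restr)
        also have "\<dots> = (if x \<in> U then lookup p x else 0)" by (rule keyeq)
        also have "\<dots> = lookup p x" using pU by (auto simp: span_mons_def in_keys_iff)
        finally show "lookup p x = lookup (\<Sum>d\<in>D. f d) x" by simp
      qed
    qed
    show ?thesis
    proof (rule ex1I[of _ f])
      show "(\<forall>d\<in>D. f d \<in> span_mons K (A d)) \<and> (\<forall>d. d \<notin> D \<longrightarrow> f d = 0) \<and> p = (\<Sum>d\<in>D. f d)" by (rule P)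
    next
      fix g assume G: "(\<forall>d\<in>D. g d \<in> span_mons K (A d)) \<and> (\<forall>d. d \<notin> D \<longrightarrow> g d = 0) \<and> p = (\<Sum>d\<in>D. g d)"
      show "g = f"
      proof
        fix d
        show "g d = f d"
        proof (cases "d \<in> D")
          case False then show ?thesis using G by (simp add: f_def)
        next
          case dD: True
          show ?thesis
          proof (rule poly_mapping_eqI)
            fix x
            show "lookup (g d) x = lookup (f d) x"
            proof (cases "x \<in> A d")
              case False
              then have "lookup (g d) x = 0" using G dD by (auto simp: span_mons_def intro: lookup_out)
              then show ?thesis using False dD by (simp add: f_def lookup_restr)
            next
              case True
              have "lookup p x = (\<Sum>e\<in>D. lookup (g e) x)" using G by (simp add: lookup_sum)
              also have "\<dots> = lookup (g d) x"
              proof -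
                have "(\<Sum>e\<in>D - {d}. lookup (g e) x) = 0"
                proof (rule sum.neutral, rule ballI)
                  fix e assume "e \<in> D - {d}"
                  then have "x \<notin> A e" using dis[of d e] dD True by blast
                  then show "lookup (g e) x = 0" using G \<open>e \<in> D - {d}\<close> by (auto simp: span_mons_def intro: lookup_out)
                qed
                then show ?thesis using sum.remove[OF fin dD, of "\<lambda>e. lookup (g e) x"] by simp
              qed
              finally show ?thesis using True dD by (simp add: f_def lookup_restr)
            qed
          qed
        qed
      qed
    qed
  qed
  show "is_direct_sum (span_mons K U) D (\<lambda>d. span_mons K (A d))"
    unfolding is_direct_sum_def using fin sub ex by blast
qed


definition ms :: "mon \<Rightarrow> nat set \<Rightarrow> mon set" where
  "ms v Z = {v + w | w. keys w \<subseteq> Z}"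

lemma ms_iff: "x \<in> ms v Z \<longleftrightarrow> (\<forall>i. lookup v i \<le> lookup x i) \<and> (\<forall>i. i \<notin> Z \<longrightarrow> lookup x i = lookup v i)"
proof
  assume "x \<in> ms v Z"
  then obtain w where "x = v + w" "keys w \<subseteq> Z" by (auto simp: ms_def)
  then show "(\<forall>i. lookup v i \<le> lookup x i) \<and> (\<forall>i. i \<notin> Z \<longrightarrow> lookup x i = lookup v i)"
    by (auto simp: lookup_add intro: lookup_out)
next
  assume H: "(\<forall>i. lookup v i \<le> lookup x i) \<and> (\<forall>i. i \<notin> Z \<longrightarrow> lookup x i = lookup v i)"
  have "x = v + (x - v)" using H by (intro poly_mapping_eqI) (simp add: lookup_add lookup_minus_nat)
  moreover have "keys (x - v) \<subseteq> Z" using H by (auto simp: in_keys_iff lookup_minus_nat)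
  ultimately show "x \<in> ms v Z" unfolding ms_def by blast
qed

lemma mons_iff: "u \<in> mons n \<longleftrightarrow> (\<forall>i. lookup u i \<noteq> 0 \<longrightarrow> 1 \<le> i \<and> i \<le> n)"
  by (auto simp: mons_def subset_iff in_keys_iff)

definition part :: "nat \<Rightarrow> mon set \<Rightarrow> (mon \<times> nat set) set \<Rightarrow> bool" where
  "part n M D \<longleftrightarrow> (\<forall>(v, Z)\<in>D. v \<in> mons n \<and> Z \<subseteq> {1..n}) \<and> finite D \<and>
     (\<forall>d\<in>D. \<forall>d'\<in>D. d \<noteq> d' \<longrightarrow> case_prod ms d \<inter> case_prod ms d' = {}) \<and>
     (\<Union>d\<in>D. case_prod ms d) = mons n - M"

lemma dec_iff: "stanley_dec K n M D \<longleftrightarrow> part n M D"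
proof -
  have "(\<lambda>(v, Z). stanley_space K v Z) = (\<lambda>d. span_mons K (case_prod ms d))"
    by (auto simp: stanley_space_def ms_def)
  then show ?thesis
    unfolding stanley_dec_def part_def compl_space_def using direct_sum_iff[of K "mons n - M" D "case_prod ms"]
    by auto
qed

lemma sdepth_part: "sdepth K n M = (SUP D\<in>{D. part n M D}. sdepth_dec D)"
  unfolding sdepth_def dec_iff ..

lemma enat_le_minus1: "(x::enat) + 1 \<le> y \<Longrightarrow> x \<le> y - 1"
  by (cases x; cases y) (auto simp: one_enat_def)

lemma enat_minus1_le: "(y::enat) \<le> x + 1 \<Longrightarrow> y - 1 \<le> x"
  by (cases x; cases y) (auto simp: one_enat_def)


lemma lookup_upd: "lookup (Poly_Mapping.update k 0 u) i = (if i = k then 0 else lookup u i)"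
  by (simp add: lookup_update)

lemma disj_aux: "A \<inter> B = {} \<Longrightarrow> C = A \<inter> K \<Longrightarrow> D = B \<inter> K \<Longrightarrow> C \<inter> D = {}"
  by blast

lemma disj_aux2: "C = {x. f x \<in> A} \<Longrightarrow> D = {x. f x \<in> B} \<Longrightarrow> A \<inter> B = {} \<Longrightarrow> C \<inter> D = {}"
  by blast

lemma dir1:
  assumes C: "mons n - M2 = {u \<in> mons n - M1. lookup u k = 0}"
    and P: "part n M1 D"
  shows "\<exists>D'. part n M2 D' \<and> sdepth_dec D \<le> sdepth_dec D' + 1"
proof -
  define D0 where "D0 = {d\<in>D. lookup (fst d) k = 0}"
  define D' where "D' = (\<lambda>(v, Z). (v, Z - {k})) ` D0"
  have fin: "finite D" using P by (simp add: part_def)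
  have ent: "\<And>v Z. (v, Z) \<in> D \<Longrightarrow> v \<in> mons n \<and> Z \<subseteq> {1..n}" using P by (auto simp: part_def)
  have dis: "\<And>d d'. d\<in>D \<Longrightarrow> d'\<in>D \<Longrightarrow> d \<noteq> d' \<Longrightarrow> case_prod ms d \<inter> case_prod ms d' = {}"
    using P by (simp add: part_def)
  have un: "(\<Union>d\<in>D. case_prod ms d) = mons n - M1" using P by (simp add: part_def)
  have msk: "ms v (Z - {k}) = ms v Z \<inter> {u. lookup u k = 0}" if "lookup v k = 0" for v Z
    using that by (auto simp: ms_iff)
  have msk0: "ms v Z \<inter> {u. lookup u k = 0} = {}" if H: "lookup v k \<noteq> 0" for v Z
  proof -
    have "lookup x k \<noteq> 0" if "x \<in> ms v Z" for x
    proof -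
      have "lookup v k \<le> lookup x k" using that unfolding ms_iff by blast
      then show ?thesis using H by linarith
    qed
    then show ?thesis by blast
  qed
  have key: "case_prod ms (case d of (v, Z) \<Rightarrow> (v, Z - {k})) = case_prod ms d \<inter> {u. lookup u k = 0}"
    if "d \<in> D0" for d using that msk by (cases d) (simp add: D0_def)
  have part': "part n M2 D'"
    unfolding part_def
  proof (intro conjI)
    show "\<forall>(v, Z)\<in>D'. v \<in> mons n \<and> Z \<subseteq> {1..n}"
    proof
      fix d assume "d \<in> D'"
      then obtain e where e: "e \<in> D0" "d = (case e of (v, Z) \<Rightarrow> (v, Z - {k}))" unfolding D'_def by blast
      obtain v Z where "e = (v, Z)" by (cases e)
      then have vz: "(v, Z) \<in> D" "d = (v, Z - {k})" using e unfolding D0_def by auto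
      have "v \<in> mons n \<and> Z \<subseteq> {1..n}" using ent[OF vz(1)] .
      then show "case d of (v, Z) \<Rightarrow> v \<in> mons n \<and> Z \<subseteq> {1..n}" using vz(2) by auto
    qed
    have "finite D0" using fin unfolding D0_def by simp
    then show "finite D'" unfolding D'_def by (rule finite_imageI)
    show "\<forall>d\<in>D'. \<forall>d'\<in>D'. d \<noteq> d' \<longrightarrow> case_prod ms d \<inter> case_prod ms d' = {}"
    proof (intro ballI impI)
      fix d1 d2 assume "d1 \<in> D'" "d2 \<in> D'" "d1 \<noteq> d2"
      then obtain e1 e2 where e: "e1 \<in> D0" "e2 \<in> D0" "d1 = (case e1 of (v, Z) \<Rightarrow> (v, Z - {k}))"
        "d2 = (case e2 of (v, Z) \<Rightarrow> (v, Z - {k}))" unfolding D'_def by blast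
      then have "e1 \<noteq> e2" using \<open>d1 \<noteq> d2\<close> by auto
      moreover have "e1 \<in> D" "e2 \<in> D" using e(1,2) by (simp_all add: D0_def)
      ultimately have "case_prod ms e1 \<inter> case_prod ms e2 = {}" using dis by blast
      moreover have "case_prod ms d1 = case_prod ms e1 \<inter> {u. lookup u k = 0}" using key[OF e(1)] e(3) by simp
      moreover have "case_prod ms d2 = case_prod ms e2 \<inter> {u. lookup u k = 0}" using key[OF e(2)] e(4) by simp
      ultimately show "case_prod ms d1 \<inter> case_prod ms d2 = {}" by (rule disj_aux)
    qed
    have "(\<Union>d\<in>D'. case_prod ms d) = (\<Union>e\<in>D0. case_prod ms (case e of (v, Z) \<Rightarrow> (v, Z - {k})))"
      unfolding D'_def by (simp add: image_image)
    also have "\<dots> = (\<Union>d\<in>D0. case_prod ms d \<inter> {u. lookup u k = 0})"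
      by (rule SUP_cong[OF refl]) (rule key)
    also have "\<dots> = (\<Union>d\<in>D. case_prod ms d \<inter> {u. lookup u k = 0})"
    proof -
      have "case_prod ms d \<inter> {u. lookup u k = 0} = {}" if "d \<in> D" "d \<notin> D0" for d
        using that msk0[of "fst d" "snd d"] by (cases d) (simp add: D0_def)
      then show ?thesis unfolding D0_def by blast
    qed
    also have "\<dots> = (mons n - M1) \<inter> {u. lookup u k = 0}" using un by blast
    also have "\<dots> = mons n - M2" using C by blast
    finally show "(\<Union>d\<in>D'. case_prod ms d) = mons n - M2" .
  qed
  have sd: "sdepth_dec D \<le> sdepth_dec D' + 1"
  proof (cases "D0 = {}")
    case True
    then show ?thesis by (simp add: D'_def sdepth_dec_def top_enat_def)
  next
    case False
    have fin0: "finite D0" using fin by (simp add: D0_def)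
    obtain d1 where "d1 \<in> D0" using False by blast
    obtain d0 where d0: "d0 \<in> D0" "\<forall>e. e \<in> D0 \<longrightarrow> card (snd d0 - {k}) \<le> card (snd e - {k})"
      using ex_has_least_nat[of "\<lambda>d. d \<in> D0" d1 "\<lambda>e. card (snd e - {k})"] \<open>d1 \<in> D0\<close> by blast
    have "sdepth_dec D' = (INF e\<in>D0. enat (card (snd e - {k})))"
      unfolding sdepth_dec_def D'_def by (simp add: image_image case_prod_beta)
    also have "\<dots> = enat (card (snd d0 - {k}))"
    proof (rule antisym)
      show "(INF e\<in>D0. enat (card (snd e - {k}))) \<le> enat (card (snd d0 - {k}))"
        using d0(1) by (rule INF_lower)
      show "enat (card (snd d0 - {k})) \<le> (INF e\<in>D0. enat (card (snd e - {k})))"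
        using d0(2) by (auto intro!: INF_greatest)
    qed
    finally have eq: "sdepth_dec D' = enat (card (snd d0 - {k}))" .
    have d0D: "d0 \<in> D" using d0(1) by (simp add: D0_def)
    have "snd d0 \<subseteq> {1..n}" using ent[of "fst d0" "snd d0"] d0D by simp
    then have "finite (snd d0)" by (rule finite_subset) simp
    then have cc: "card (snd d0) \<le> card (snd d0 - {k}) + 1"
      using card_Diff_singleton_if[of "snd d0" k] card_gt_0_iff[of "snd d0"] by (cases "k \<in> snd d0") auto
    have "sdepth_dec D \<le> enat (card (snd d0))"
    proof -
      have "(INF (v, Z)\<in>D. enat (card Z)) \<le> (case d0 of (v, Z) \<Rightarrow> enat (card Z))"
        using d0D by (rule INF_lower)
      then show ?thesis unfolding sdepth_dec_def by (simp add: case_prod_beta)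
    qed
    also have "\<dots> \<le> enat (card (snd d0 - {k})) + 1" using cc by (simp add: one_enat_def)
    finally show ?thesis using eq by simp
  qed
  show ?thesis using part' sd by blast
qed


lemma dir2:
  assumes C: "mons n - M2 = {u \<in> mons n - M1. lookup u k = 0}"
    and Zc: "\<And>x. x \<in> mons n - M1 \<longleftrightarrow> Poly_Mapping.update k 0 x \<in> mons n - M2"
    and k: "1 \<le> k" "k \<le> n"
    and P: "part n M2 D'"
  shows "\<exists>D. part n M1 D \<and> sdepth_dec D' + 1 \<le> sdepth_dec D"
proof -
  define D where "D = (\<lambda>(v, Z). (v, insert k Z)) ` D'"
  have fin: "finite D'" using P by (simp add: part_def)
  have ent: "\<And>v Z. (v, Z) \<in> D' \<Longrightarrow> v \<in> mons n \<and> Z \<subseteq> {1..n}" using P by (auto simp: part_def)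
  have dis: "\<And>d d'. d\<in>D' \<Longrightarrow> d'\<in>D' \<Longrightarrow> d \<noteq> d' \<Longrightarrow> case_prod ms d \<inter> case_prod ms d' = {}"
    using P by (simp add: part_def)
  have un: "(\<Union>d\<in>D'. case_prod ms d) = mons n - M2" using P by (simp add: part_def)
  have vk: "lookup v k = 0 \<and> k \<notin> Z" if "(v, Z) \<in> D'" for v Z
  proof
    have "v \<in> ms v Z" by (simp add: ms_iff)
    then have vin: "v \<in> mons n - M2" using un that by blast
    then show "lookup v k = 0" using C by blast
    show "k \<notin> Z"
    proof
      assume "k \<in> Z"
      define x where "x = v + Poly_Mapping.single k 1"
      have "x \<in> ms v Z" using \<open>k \<in> Z\<close> by (auto simp: ms_iff x_def lookup_add lookup_single when_def)
      then have "x \<in> mons n - M2" using un that by blast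
      then have "lookup x k = 0" using C by blast
      then show False by (simp add: x_def lookup_add)
    qed
  qed
  have msins: "ms v (insert k Z) = {x. Poly_Mapping.update k 0 x \<in> ms v Z}" if vk0: "lookup v k = 0" for v Z
  proof (rule set_eqI)
    fix x
    have "x \<in> ms v (insert k Z) \<longleftrightarrow>
      (\<forall>i. lookup v i \<le> lookup x i) \<and> (\<forall>i. i \<notin> insert k Z \<longrightarrow> lookup x i = lookup v i)"
      by (rule ms_iff)
    also have "\<dots> \<longleftrightarrow> (\<forall>i. lookup v i \<le> lookup (Poly_Mapping.update k 0 x) i) \<and>
      (\<forall>i. i \<notin> Z \<longrightarrow> lookup (Poly_Mapping.update k 0 x) i = lookup v i)"
      unfolding lookup_upd using vk0 by (metis insert_iff le0)
    also have "\<dots> \<longleftrightarrow> Poly_Mapping.update k 0 x \<in> ms v Z" by (rule ms_iff[symmetric])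
    finally show "x \<in> ms v (insert k Z) \<longleftrightarrow> x \<in> {x. Poly_Mapping.update k 0 x \<in> ms v Z}" by simp
  qed
  have key: "case_prod ms (case d of (v, Z) \<Rightarrow> (v, insert k Z)) = {x. Poly_Mapping.update k 0 x \<in> case_prod ms d}"
    if dD: "d \<in> D'" for d
  proof -
    obtain v Z where d: "d = (v, Z)" by (cases d)
    then have "lookup v k = 0" using vk dD by blast
    then show ?thesis using msins[of v Z] d by simp
  qed
  have part': "part n M1 D"
    unfolding part_def
  proof (intro conjI)
    show "\<forall>(v, Z)\<in>D. v \<in> mons n \<and> Z \<subseteq> {1..n}"
    proof
      fix d assume "d \<in> D"
      then obtain e where e: "e \<in> D'" "d = (case e of (v, Z) \<Rightarrow> (v, insert k Z))" unfolding D_def by blast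
      obtain v Z where "e = (v, Z)" by (cases e)
      then have vz: "(v, Z) \<in> D'" "d = (v, insert k Z)" using e by auto
      have "v \<in> mons n \<and> Z \<subseteq> {1..n}" using ent[OF vz(1)] .
      then have "v \<in> mons n \<and> insert k Z \<subseteq> {1..n}" using k by simp
      then show "case d of (v, Z) \<Rightarrow> v \<in> mons n \<and> Z \<subseteq> {1..n}" using vz(2) by simp
    qed
    show "finite D" unfolding D_def using fin by (rule finite_imageI)
    show "\<forall>d\<in>D. \<forall>d'\<in>D. d \<noteq> d' \<longrightarrow> case_prod ms d \<inter> case_prod ms d' = {}"
    proof (intro ballI impI)
      fix d1 d2 assume "d1 \<in> D" "d2 \<in> D" "d1 \<noteq> d2"
      then obtain e1 e2 where e: "e1 \<in> D'" "e2 \<in> D'" "d1 = (case e1 of (v, Z) \<Rightarrow> (v, insert k Z))"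
        "d2 = (case e2 of (v, Z) \<Rightarrow> (v, insert k Z))" unfolding D_def by blast
      then have "e1 \<noteq> e2" using \<open>d1 \<noteq> d2\<close> by auto
      then have E: "case_prod ms e1 \<inter> case_prod ms e2 = {}" using dis e(1,2) by blast
      have "case_prod ms d1 = {x. Poly_Mapping.update k 0 x \<in> case_prod ms e1}" using key[OF e(1)] e(3) by simp
      moreover have "case_prod ms d2 = {x. Poly_Mapping.update k 0 x \<in> case_prod ms e2}" using key[OF e(2)] e(4) by simp
      ultimately show "case_prod ms d1 \<inter> case_prod ms d2 = {}" using E by (rule disj_aux2)
    qed
    have "(\<Union>d\<in>D. case_prod ms d) = (\<Union>e\<in>D'. case_prod ms (case e of (v, Z) \<Rightarrow> (v, insert k Z)))"
      unfolding D_def by (simp add: image_image)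
    also have "\<dots> = (\<Union>d\<in>D'. {x. Poly_Mapping.update k 0 x \<in> case_prod ms d})"
      by (rule SUP_cong[OF refl]) (rule key)
    also have "\<dots> = {x. Poly_Mapping.update k 0 x \<in> (\<Union>d\<in>D'. case_prod ms d)}" by blast
    also have "\<dots> = {x. Poly_Mapping.update k 0 x \<in> mons n - M2}" using un by simp
    also have "\<dots> = mons n - M1" using Zc by blast
    finally show "(\<Union>d\<in>D. case_prod ms d) = mons n - M1" .
  qed
  have sd: "sdepth_dec D' + 1 \<le> sdepth_dec D"
    unfolding sdepth_dec_def D_def
  proof (rule INF_greatest)
    fix d assume "d \<in> (\<lambda>(v, Z). (v, insert k Z)) ` D'"
    then obtain v Z where e: "(v, Z) \<in> D'" "d = (v, insert k Z)" by auto
    have "Z \<subseteq> {1..n}" using ent[OF e(1)] by simp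
    then have "finite Z" by (rule finite_subset) simp
    then have cc: "card (insert k Z) = card Z + 1" using vk[OF e(1)] by simp
    have "(INF (v, Z)\<in>D'. enat (card Z)) \<le> enat (card Z)" using e(1) by (metis (no_types, lifting) INF_lower case_prod_conv)
    then have "(INF (v, Z)\<in>D'. enat (card Z)) + 1 \<le> enat (card Z) + 1" by (rule add_right_mono)
    also have "\<dots> = enat (card (insert k Z))" using cc by (simp add: one_enat_def)
    finally show "(INF (v, Z)\<in>D'. enat (card Z)) + 1 \<le> (case d of (v, Z) \<Rightarrow> enat (card Z))" using e(2) by simp
  qed
  show ?thesis using part' sd by blast
qed


theorem lemma1p2:
  fixes K :: "'k::field itself" and n m k :: nat and J :: "mon set"
  assumes "m < n" and "monomial_ideal m J" and "m < k" and "k \<le> n"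
  shows "sdepth K n (gen_ideal n (gen_ideal n J \<union> {var k}))
           = sdepth K n (gen_ideal n J) - 1"
proof -
  define M1 where "M1 = gen_ideal n J"
  define M2 where "M2 = gen_ideal n (M1 \<union> {var k})"
  define z where "z = (\<lambda>x::mon. Poly_Mapping.update k 0 x)"
  have k1: "1 \<le> k" using assms by simp
  have Jm: "J \<subseteq> mons m" using assms(2) by (simp add: monomial_ideal_def)
  have addm: "a + b \<in> mons n" if "a \<in> mons n" "b \<in> mons n" for a b
    using that by (auto simp: mons_iff lookup_add)
  have F1: "M1 \<subseteq> mons n" by (auto simp: M1_def gen_ideal_def)
  have F2: "u + w \<in> M1" if uw: "u \<in> M1" "w \<in> mons n" for u w
  proof -
    obtain g w' where g: "g \<in> J" "w' \<in> mons n" "u = g + w'" "u \<in> mons n"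
      using uw(1) by (auto simp: M1_def gen_ideal_def)
    have "u + w = g + (w' + w)" using g by (simp add: add.assoc)
    moreover have "w' + w \<in> mons n" using addm g uw by blast
    moreover have "u + w \<in> mons n" using addm g uw by blast
    ultimately show ?thesis using g by (auto simp: M1_def gen_ideal_def)
  qed
  have zl: "lookup (z x) i = (if i = k then 0 else lookup x i)" for x i by (simp add: z_def lookup_upd)
  have zmons: "z x \<in> mons n \<longleftrightarrow> x \<in> mons n" for x
    using k1 assms(4) by (auto simp: mons_iff zl)
  have F3: "z u \<in> M1" if uM: "u \<in> M1" for u
  proof -
    obtain g w where g: "g \<in> J" "w \<in> mons n" "u = g + w" "u \<in> mons n"
      using uM by (auto simp: M1_def gen_ideal_def)
    have "g \<in> mons m" using Jm g(1) by blast
    then have gk: "lookup g k = 0" using assms(3) unfolding mons_iff by (meson leD)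
    have "z u = g + z w" using gk g(3) by (intro poly_mapping_eqI) (simp add: zl lookup_add)
    moreover have "z w \<in> mons n" using zmons g by blast
    moreover have "z u \<in> mons n" using zmons g by blast
    ultimately show ?thesis using g by (auto simp: M1_def gen_ideal_def)
  qed
  have vk: "var k \<in> mons n" using k1 assms(4) by (auto simp: mons_iff var_def lookup_single when_def)
  have M2c: "u \<in> M2 \<longleftrightarrow> u \<in> mons n \<and> (u \<in> M1 \<or> lookup u k \<noteq> 0)" for u
  proof
    assume "u \<in> M2"
    then obtain g w where g: "g \<in> M1 \<union> {var k}" "w \<in> mons n" "u = g + w" "u \<in> mons n"
      by (auto simp: M2_def gen_ideal_def)
    show "u \<in> mons n \<and> (u \<in> M1 \<or> lookup u k \<noteq> 0)"
    proof (cases "g \<in> M1")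
      case True then show ?thesis using F2 g by blast
    next
      case False then have "g = var k" using g by blast
      then show ?thesis using g by (simp add: var_def lookup_add)
    qed
  next
    assume H: "u \<in> mons n \<and> (u \<in> M1 \<or> lookup u k \<noteq> 0)"
    have z0: "(0::mon) \<in> mons n" by (simp add: mons_def)
    show "u \<in> M2"
    proof (cases "u \<in> M1")
      case True then show ?thesis using H z0 unfolding M2_def gen_ideal_def by force
    next
      case False
      then have uk: "lookup u k \<noteq> 0" using H by blast
      have vle: "lookup (var k) i \<le> lookup u i" for i using uk by (cases "i = k") (simp_all add: var_def lookup_single when_def)
      have "u = var k + (u - var k)"
        by (intro poly_mapping_eqI) (simp add: lookup_add lookup_minus_nat vle le_add_diff_inverse)
      moreover have "u - var k \<in> mons n" using H by (auto simp: mons_iff lookup_minus_nat)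
      ultimately show ?thesis using H unfolding M2_def gen_ideal_def by blast
    qed
  qed
  have C: "mons n - M2 = {u \<in> mons n - M1. lookup u k = 0}" using M2c by blast
  have Zc: "x \<in> mons n - M1 \<longleftrightarrow> Poly_Mapping.update k 0 x \<in> mons n - M2" for x
  proof -
    have zk: "lookup (z x) k = 0" by (simp add: zl)
    have "x \<in> M1 \<longleftrightarrow> z x \<in> M1" if "x \<in> mons n"
    proof
      assume "x \<in> M1" then show "z x \<in> M1" by (rule F3)
    next
      assume "z x \<in> M1"
      moreover have "Poly_Mapping.single k (lookup x k) \<in> mons n" using k1 assms(4)
        by (auto simp: mons_iff lookup_single when_def)
      moreover have "x = z x + Poly_Mapping.single k (lookup x k)"
        by (intro poly_mapping_eqI) (simp add: zl lookup_add lookup_single when_def)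
      ultimately show "x \<in> M1" using F2 by metis
    qed
    then show ?thesis using C zk zmons unfolding z_def by blast
  qed
  have le1: "sdepth K n M2 \<le> sdepth K n M1 - 1"
    unfolding sdepth_part[of K n M2]
  proof (rule SUP_least)
    fix D' assume "D' \<in> {D. part n M2 D}"
    then obtain D where D: "part n M1 D" "sdepth_dec D' + 1 \<le> sdepth_dec D"
      using dir2[OF C Zc k1 assms(4)] by blast
    have "sdepth_dec D \<le> sdepth K n M1" unfolding sdepth_part using D(1) by (auto intro: SUP_upper)
    then show "sdepth_dec D' \<le> sdepth K n M1 - 1" using D(2) by (intro enat_le_minus1) simp
  qed
  have le2: "sdepth K n M1 \<le> sdepth K n M2 + 1"
    unfolding sdepth_part[of K n M1]
  proof (rule SUP_least)
    fix D assume "D \<in> {D. part n M1 D}"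
    then obtain D' where D': "part n M2 D'" "sdepth_dec D \<le> sdepth_dec D' + 1"
      using dir1[OF C] by blast
    have "sdepth_dec D' \<le> sdepth K n M2" unfolding sdepth_part using D'(1) by (auto intro: SUP_upper)
    then show "sdepth_dec D \<le> sdepth K n M2 + 1" using D'(2) by (meson add_right_mono order_trans)
  qed
  have "sdepth K n M2 = sdepth K n M1 - 1"
    using le1 enat_minus1_le[OF le2] by (rule antisym)
  then show ?thesis unfolding M2_def M1_def .
qed

end
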